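(* Under the standing setup and assumptions, for every $k\ge 0$, $$\mathbb{E}\big[\|\boldsymbol{x}^{k+1}-\boldsymbol{x}^*\|^2\big]\le \mathbb{E}\big[\|\boldsymbol{x}^{k}-\boldsymbol{x}^*\|^2\big]-2a_k\,\mathbb{E}\big[\mathcal{L}(\boldsymbol{x}^k,\boldsymbol{\lambda}^k)-\mathcal{L}(\boldsymbol{x}^*,\boldsymbol{\lambda}^k)\big]+a_k^2\big(2LG(N-\bar A_k(\beta))+\beta\sigma^2+L^2\big)+2a_k(N-\bar A_k(\beta))RG+a_k^2L^2(N-\bar A_k(\beta))^2 .$$
   Context: Standing setup (DPD-AirComp). Let $N\ge1$, $D\ge1$, $\mathcal{N}=\{1,\dots,N\}$. Let $f_0,f_1,\dots,f_N:\mathbb{R}^D\to\mathbb{R}$ be convex (not necessarily differentiable) and $\mathcal{X}\subset\mathbb{R}^D$ nonempty, compact and convex. Consider $\min_{\boldsymbol{x}\in\mathcal{X}} f_0(\boldsymbol{x})$ s.t. $f_i(\boldsymbol{x})\le 0$, $i\in\mathcal{N}$, with optimal value $f_0^*$. Write $\boldsymbol{F}(\boldsymbol{x})=[f_1(\boldsymbol{x}),\dots,f_N(\boldsymbol{x})]^T$, the Lagrangian $\mathcal{L}(\boldsymbol{x},\boldsymbol{\lambda})=f_0(\boldsymbol{x})+\sum_{i=1}^N\lambda_if_i(\boldsymbol{x})$ on $\mathcal{X}\times\mathbb{R}^N_+$, and the dual function $q(\boldsymbol{\lambda})=\inf_{\boldsymbol{x}\in\mathcal{X}}\mathcal{L}(\boldsymbol{x},\boldsymbol{\lambda})$.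 Let $\boldsymbol{g}_i(\boldsymbol{x})$ denote a (fixed choice of) subgradient of $f_i$ at $\boldsymbol{x}$, $i=0,\dots,N$, and $\boldsymbol{\mathcal{L}}_x(\boldsymbol{x},\boldsymbol{\lambda})=\boldsymbol{g}_0(\boldsymbol{x})+\sum_i\lambda_i\boldsymbol{g}_i(\boldsymbol{x})$, $\boldsymbol{\mathcal{L}}_\lambda(\boldsymbol{x},\boldsymbol{\lambda})=\boldsymbol{F}(\boldsymbol{x})$. Let $\bar{\boldsymbol{x}}\in\mathcal{X}$ be a Slater point ($f_i(\bar{\boldsymbol{x}})<0$ for all $i$), $\gamma=\min_{1\le i\le N}\{-f_i(\bar{\boldsymbol{x}})\}$, $\tilde q=q(\tilde{\boldsymbol{\lambda}})$ for some fixed $\tilde{\boldsymbol{\lambda}}\succeq 0$, and for a parameter $r>0$ let $\mathcal{D}=\{\boldsymbol{\lambda}\succeq 0:\|\boldsymbol{\lambda}\|_\infty\le \frac{f_0(\bar{\boldsymbol{x}})-\tilde q}{\gamma}+r\}$. $\mathcal{P}_{\mathcal{S}}[z]=\arg\min_{s\in\mathcal{S}}\|s-z\|^2$ is Euclidean projection. Let $(\boldsymbol{x}^*,\boldsymbol{\lambda}^* )\in\mathcal{X}\times\mathcal{D}$ be a saddle point of $\mathcal{L}$, i.e. $\mathcal{L}(\boldsymbol{x}^*,\boldsymbol{\lambda})\le\mathcal{L}(\boldsymbol{x}^*,\boldsymbol{\lambda}^* )\le\mathcal{L}(\boldsymbol{x},\boldsymbol{\lambda}^* )$ for all $\boldsymbol{x}\in\mathcal{X},\boldsymbol{\lambda}\in\mathcal{D}$,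 with $\mathcal{L}(\boldsymbol{x}^*,\boldsymbol{\lambda}^* )=f_0^*$. Iteration: given initial $\boldsymbol{x}^0\in\mathcal{X}$, $\boldsymbol{\lambda}^0\in\mathcal{D}$, step sizes $a_k\in(0,1)$, a preprocessing scalar $\beta>0$ and a power budget $P_{\max}>0$, at round $k$ set $\boldsymbol{s}_i^k=\lambda_i^k\boldsymbol{g}_i(\boldsymbol{x}^k)$; with random channel coefficients $h_i^k$, the participating set is $\mathcal{A}^k=\{i\in\mathcal{N}: |h_i^k|^2\ge \|\boldsymbol{s}_i^k\|^2/(\beta P_{\max})\}$; the server obtains $\tilde{\boldsymbol{y}}^k=\sum_{i\in\mathcal{A}^k}\boldsymbol{s}_i^k+\sqrt{\beta}\,\boldsymbol{n}^k$, where $\boldsymbol{n}^k\in\mathbb{R}^D$ is zero-mean noise with $\mathbb{E}\|\boldsymbol{n}^k\|^2=\sigma^2$, independent of all other randomness; updates are $\boldsymbol{x}^{k+1}=\mathcal{P}_{\mathcal{X}}[\boldsymbol{x}^k-a_k(\boldsymbol{g}_0(\boldsymbol{x}^k)+\tilde{\boldsymbol{y}}^k)]$ and $\lambda_i^{k+1}=\mathcal{P}_{\mathcal{D}}[\lambda_i^k+a_kf_i(\boldsymbol{x}^k)]$ (componentwise projection onto $[0,\frac{f_0(\bar{\boldsymbol{x}})-\tilde q}{\gamma}+r]$). $\bar A_k(\beta)=\mathbb{E}[|\mathcal{A}^k|]$ is the average number of participating users in round $k$. Expectations are over channels and noise. Assumptions: there are constants $G,L,R>0$ with $L>G$ such that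 for all $i,k$: $\|\lambda_i^k\boldsymbol{g}_i(\boldsymbol{x}^k)\|\le G$, $\|\boldsymbol{\mathcal{L}}_x(\boldsymbol{x}^k,\boldsymbol{\lambda}^k)\|\le L$, $\|\boldsymbol{F}(\boldsymbol{x}^k)\|\le L$, and $\|\boldsymbol{x}^k-\boldsymbol{x}^*\|\le R$. *)

theory Defs
  imports "HOL-Probability.Probability"
begin

text \<open>Lagrangian L(x,lambda) = f_0(x) + sum_{i=1..N} lambda_i f_i(x); multipliers are
  functions nat => real of which only the components 1..N are used.\<close>
definition Lag :: "nat \<Rightarrow> (nat \<Rightarrow> 'v \<Rightarrow> real) \<Rightarrow> 'v \<Rightarrow> (nat \<Rightarrow> real) \<Rightarrow> real" where
  "Lag N f x lam = f 0 x + (\<Sum>i\<in>{1..N}. lam i * f i x)"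

definition dualfun :: "nat \<Rightarrow> (nat \<Rightarrow> 'v \<Rightarrow> real) \<Rightarrow> 'v set \<Rightarrow> (nat \<Rightarrow> real) \<Rightarrow> real" where
  "dualfun N f X lam = (INF x\<in>X. Lag N f x lam)"

definition optval :: "nat \<Rightarrow> (nat \<Rightarrow> 'v \<Rightarrow> real) \<Rightarrow> 'v set \<Rightarrow> real" where
  "optval N f X = (INF x\<in>{x\<in>X. \<forall>i\<in>{1..N}. f i x \<le> 0}. f 0 x)"

definition is_subgrad :: "('v::real_inner \<Rightarrow> real) \<Rightarrow> 'v \<Rightarrow> 'v \<Rightarrow> bool" where
  "is_subgrad h x g \<longleftrightarrow> (\<forall>y. h y \<ge> h x + inner g (y - x))"

definition Dset :: "nat \<Rightarrow> real \<Rightarrow> (nat \<Rightarrow> real) set" where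
  "Dset N B = {lam. (\<forall>i\<in>{1..N}. 0 \<le> lam i) \<and> (MAX i\<in>{1..N}. \<bar>lam i\<bar>) \<le> B}"

text \<open>Independence of two random variables with possibly different value spaces
  (same as prob_space.indep_var, which requires a common value type).\<close>
definition indep_rv :: "'w measure \<Rightarrow> 'a measure \<Rightarrow> ('w \<Rightarrow> 'a) \<Rightarrow> 'b measure \<Rightarrow> ('w \<Rightarrow> 'b) \<Rightarrow> bool" where
  "indep_rv M Ma X Mb Y \<longleftrightarrow> X \<in> measurable M Ma \<and> Y \<in> measurable M Mb \<and>
     prob_space.indep_set M {X -` A \<inter> space M | A. A \<in> sets Ma} {Y -` B \<inter> space M | B. B \<in> sets Mb}"

end

theory Submission
  imports Defs
begin


lemma min_trick:
  fixes u e :: "'a::real_normed_vector"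
  assumes "q \<le> R\<^sup>2" "q \<le> (norm (u + e))\<^sup>2" "R \<ge> 0"
  shows "q \<le> (norm u)\<^sup>2 + 2 * R * norm e"
proof -
  define t where "t = norm u"
  define s where "s = norm e"
  have t0: "t \<ge> 0" and s0: "s \<ge> 0" by (auto simp: t_def s_def)
  have "norm (u + e) \<le> t + s" unfolding t_def s_def by (rule norm_triangle_ineq)
  hence q1: "q \<le> (t + s)\<^sup>2" using assms(2) by (smt (verit) norm_ge_zero power_mono)
  show ?thesis
  proof (cases "t + s \<le> R")
    case True
    hence "(t + s)\<^sup>2 \<le> t\<^sup>2 + 2 * R * s" using t0 s0
    proof -
      have "s * (s + 2 * t) \<le> s * (2 * R)" using True t0 s0 by (intro mult_left_mono) auto
      thus ?thesis by (simp add: power2_eq_square algebra_simps)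
    qed
    thus ?thesis using q1 unfolding t_def s_def by linarith
  next
    case False
    show ?thesis
    proof (cases "t \<ge> R")
      case True
      hence "R\<^sup>2 \<le> t\<^sup>2" using assms(3) by (simp add: power_mono)
      thus ?thesis using assms(1) s0 assms(3) unfolding t_def s_def
        by (smt (verit) mult_nonneg_nonneg)
    next
      case f2: False
      have "R\<^sup>2 - t\<^sup>2 = (R - t) * (R + t)" by (simp add: power2_eq_square algebra_simps)
      also have "\<dots> \<le> s * (2*R)" using False f2 t0 s0
        by (intro mult_mono) auto
      also have "\<dots> = 2 * R * s" by simp
      finally have "R\<^sup>2 - t\<^sup>2 \<le> 2 * R * s" .
      thus ?thesis using assms(1) unfolding t_def s_def by linarith
    qed
  qed
qed

lemma indep_inner_zero:
  fixes nk :: "'w \<Rightarrow> 'v::euclidean_space" and w :: "'w \<Rightarrow> 'v"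
  assumes prob: "prob_space M"
    and ind: "indep_rv M (borel :: 'v measure) nk MY Y"
    and nint: "integrable M nk" and nmean: "integral\<^sup>L M nk = 0"
    and wmeas: "w \<in> borel_measurable (vimage_algebra (space M) Y MY)"
    and wb: "\<forall>\<omega>. norm (w \<omega>) \<le> C"
  shows "integrable M (\<lambda>\<omega>. inner (w \<omega>) (nk \<omega>))"
    "integral\<^sup>L M (\<lambda>\<omega>. inner (w \<omega>) (nk \<omega>)) = 0"
proof -
  interpret prob_space M by (rule prob)
  have Ymeas: "Y \<in> measurable M MY" and nmeas: "nk \<in> borel_measurable M"
    and iset: "indep_set {nk -` A \<inter> space M | A. A \<in> sets borel} {Y -` B \<inter> space M | B. B \<in> sets MY}"
    using ind unfolding indep_rv_def by auto
  have YP: "Y \<in> space M \<rightarrow> space MY" using Ymeas by (auto simp: measurable_def)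
  have sub: "subalgebra M (vimage_algebra (space M) Y MY)"
    unfolding subalgebra_def using Ymeas
    by (auto simp: sets_vimage_algebra2[OF YP] measurable_def)
  have wM: "w \<in> borel_measurable M" by (rule measurable_from_subalg[OF sub wmeas])
  have each: "integrable M (\<lambda>\<omega>. inner (nk \<omega>) b * inner (w \<omega>) b) \<and>
     integral\<^sup>L M (\<lambda>\<omega>. inner (nk \<omega>) b * inner (w \<omega>) b) = 0" if b: "b \<in> Basis" for b
  proof -
    define V1 where "V1 = vimage_algebra (space M) nk (borel :: 'v measure)"
    define V2 where "V2 = vimage_algebra (space M) Y MY"
    have nP: "nk \<in> space M \<rightarrow> space (borel :: 'v measure)" by simp
    have iset2: "indep_set (sets V1) (sets V2)"
      unfolding V1_def V2_def sets_vimage_algebra2[OF YP] sets_vimage_algebra2[OF nP]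
      using iset by simp
    have nbm: "(\<lambda>\<omega>. inner (nk \<omega>) b) \<in> borel_measurable V1"
      unfolding V1_def using measurable_vimage_algebra1[OF nP] by measurable
    have wbm: "(\<lambda>\<omega>. inner (w \<omega>) b) \<in> borel_measurable V2"
      unfolding V2_def using wmeas by measurable
    have sV1: "space V1 = space M" "space V2 = space M" by (simp_all add: V1_def V2_def)
    have gen: "sigma_sets (space M) {F -` A \<inter> space M | A. A \<in> sets (borel::real measure)} \<subseteq> sets V"
      if "F \<in> borel_measurable V" "space V = space M" for F and V :: "'w measure"
    proof (rule sigma_algebra.sigma_sets_subset)
      show "sigma_algebra (space M) (sets V)" using sets.sigma_algebra_axioms[of V] that(2) by simp
      show "{F -` A \<inter> space M | A. A \<in> sets (borel::real measure)} \<subseteq> sets V"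
        using measurable_sets[OF that(1)] that(2) by auto
    qed
    have ivar: "indep_var borel (\<lambda>\<omega>. inner (nk \<omega>) b) borel (\<lambda>\<omega>. inner (w \<omega>) b)"
      unfolding indep_var_eq
    proof (intro conjI)
      show "random_variable borel (\<lambda>\<omega>. inner (nk \<omega>) b)" using nmeas by measurable
      show "random_variable borel (\<lambda>\<omega>. inner (w \<omega>) b)" using wM by measurable
      show "indep_set (sigma_sets (space M) {(\<lambda>\<omega>. inner (nk \<omega>) b) -` A \<inter> space M | A. A \<in> sets borel})
          (sigma_sets (space M) {(\<lambda>\<omega>. inner (w \<omega>) b) -` A \<inter> space M | A. A \<in> sets borel})"
        unfolding indep_set_def
        apply (rule indep_sets_mono_sets[OF iset2[unfolded indep_set_def]])
        using gen[OF nbm sV1(1)] gen[OF wbm sV1(2)] by (auto split: bool.split)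
    qed
    have i1: "integrable M (\<lambda>\<omega>. inner (nk \<omega>) b)" using nint by simp
    have i2: "integrable M (\<lambda>\<omega>. inner (w \<omega>) b)"
    proof (rule integrable_const_bound[where B=C])
      show "AE x in M. norm (inner (w x) b) \<le> C" using wb b
        by (auto intro!: AE_I2 order_trans[OF Basis_le_norm])
      show "(\<lambda>x. inner (w x) b) \<in> borel_measurable M" using wM by measurable
    qed
    have "integral\<^sup>L M (\<lambda>\<omega>. inner (nk \<omega>) b) = 0" using nint nmean by simp
    thus ?thesis using indep_var_lebesgue_integral[OF ivar i1 i2] indep_var_integrable[OF ivar i1 i2] by simp
  qed
  have eq: "(\<lambda>\<omega>. inner (w \<omega>) (nk \<omega>)) = (\<lambda>\<omega>. \<Sum>b\<in>Basis. inner (nk \<omega>) b * inner (w \<omega>) b)"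
    by (subst euclidean_inner) (simp add: mult.commute)
  show "integrable M (\<lambda>\<omega>. inner (w \<omega>) (nk \<omega>))"
    unfolding eq by (rule Bochner_Integration.integrable_sum) (use each in blast)
  show "integral\<^sup>L M (\<lambda>\<omega>. inner (w \<omega>) (nk \<omega>)) = 0"
    unfolding eq by (subst Bochner_Integration.integral_sum) (use each in auto)
qed

lemma norm_diff_sq:
  fixes u v :: "'a::real_inner"
  shows "(norm (u - v))\<^sup>2 = (norm u)\<^sup>2 - 2 * inner u v + (norm v)\<^sup>2"
  by (simp add: power2_norm_eq_inner inner_diff_left inner_diff_right inner_commute)


lemma pointwise_step:
  fixes xk xs x1 g0 nv SA E Lx :: "'v::euclidean_space"
  assumes x1: "x1 = closest_point X (xk - a *\<^sub>R (g0 + (SA + sqrt \<beta> *\<^sub>R nv)))"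
    and X: "convex X" "closed X" "X \<noteq> {}" "xs \<in> X"
    and R: "norm (x1 - xs) \<le> R"
    and a: "a > 0" and beta: "\<beta> > 0"
    and Lx: "Lx = g0 + SA + E" and E: "norm E \<le> mG" and LxL: "norm Lx \<le> L"
    and gap: "gap \<le> inner Lx (xk - xs)"
  shows "(norm (x1 - xs))\<^sup>2 \<le> (norm (xk - xs))\<^sup>2 - 2 * a * gap + a\<^sup>2 * L\<^sup>2
      - 2 * a * sqrt \<beta> * inner (xk - xs - a *\<^sub>R Lx) nv + a\<^sup>2 * \<beta> * (norm nv)\<^sup>2 + 2 * a * R * mG"
proof -
  define v where "v = xk - a *\<^sub>R (g0 + (SA + sqrt \<beta> *\<^sub>R nv))"
  define w where "w = xk - xs - a *\<^sub>R Lx"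
  have R0: "R \<ge> 0" using R norm_ge_zero order_trans by blast
  have "dist (closest_point X v) (closest_point X xs) \<le> dist v xs"
    by (rule closest_point_lipschitz[OF X(1-3)])
  hence d: "norm (x1 - xs) \<le> norm (v - xs)"
    using closest_point_self[OF X(4)] x1 unfolding v_def by (simp add: dist_norm)
  have veq: "v - xs = (w - (a * sqrt \<beta>) *\<^sub>R nv) + a *\<^sub>R E"
    unfolding v_def w_def Lx by (simp add: algebra_simps)
  have q1: "(norm (x1 - xs))\<^sup>2 \<le> R\<^sup>2" using R by (simp add: power_mono)
  have q2: "(norm (x1 - xs))\<^sup>2 \<le> (norm ((w - (a * sqrt \<beta>) *\<^sub>R nv) + a *\<^sub>R E))\<^sup>2"
    using d veq by (metis norm_ge_zero power_mono)
  have m: "(norm (x1 - xs))\<^sup>2 \<le> (norm (w - (a * sqrt \<beta>) *\<^sub>R nv))\<^sup>2 + 2 * R * norm (a *\<^sub>R E)"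
    by (rule min_trick[OF q1 q2 R0])
  have "norm (a *\<^sub>R E) \<le> a * mG" using a E by (simp add: mult_left_mono)
  hence "2 * R * norm (a *\<^sub>R E) \<le> 2 * R * (a * mG)" using R0 by (intro mult_left_mono) auto
  hence m2: "2 * R * norm (a *\<^sub>R E) \<le> 2 * a * R * mG" by (simp add: algebra_simps)
  have u: "(norm (w - (a * sqrt \<beta>) *\<^sub>R nv))\<^sup>2 = (norm w)\<^sup>2 - 2 * a * sqrt \<beta> * inner w nv + a\<^sup>2 * \<beta> * (norm nv)\<^sup>2"
    using beta a by (simp add: norm_diff_sq power_mult_distrib)
  have ww: "(norm w)\<^sup>2 = (norm (xk - xs))\<^sup>2 - 2 * a * inner (xk - xs) Lx + a\<^sup>2 * (norm Lx)\<^sup>2"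
    unfolding w_def using a by (simp add: norm_diff_sq power_mult_distrib)
  have "a\<^sup>2 * (norm Lx)\<^sup>2 \<le> a\<^sup>2 * L\<^sup>2" using LxL by (simp add: power_mono mult_left_mono)
  moreover have "2 * a * gap \<le> 2 * a * inner (xk - xs) Lx" using gap a by (simp add: inner_commute)
  ultimately show ?thesis using m m2 u ww unfolding w_def by linarith
qed



theorem mainTheorem1:
  fixes M :: "'w measure"
    and N :: nat
    and f :: "nat \<Rightarrow> 'v::euclidean_space \<Rightarrow> real"
    and g :: "nat \<Rightarrow> 'v \<Rightarrow> 'v"
    and X :: "'v set"
    and xbar :: 'v and lamt :: "nat \<Rightarrow> real" and r :: real
    and xs :: 'v and lams :: "nat \<Rightarrow> real"
    and x0 :: 'v and lam0 :: "nat \<Rightarrow> real"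
    and a :: "nat \<Rightarrow> real" and \<beta> Pmax \<sigma> G L R :: real
    and h :: "nat \<Rightarrow> nat \<Rightarrow> 'w \<Rightarrow> complex"
    and n :: "nat \<Rightarrow> 'w \<Rightarrow> 'v"
    and x :: "nat \<Rightarrow> 'w \<Rightarrow> 'v"
    and lam :: "nat \<Rightarrow> 'w \<Rightarrow> nat \<Rightarrow> real"
    and k :: nat
  defines "B \<equiv> (f 0 xbar - dualfun N f X lamt) / Min ((\<lambda>i. - f i xbar) ` {1..N}) + r"
    and "s \<equiv> (\<lambda>j \<omega> i. lam j \<omega> i *\<^sub>R g i (x j \<omega>))"
    and "A \<equiv> (\<lambda>j \<omega>. {i\<in>{1..N}. (cmod (h i j \<omega>))\<^sup>2 \<ge> (norm (lam j \<omega> i *\<^sub>R g i (x j \<omega>)))\<^sup>2 / (\<beta> * Pmax)})"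
  assumes N: "N \<ge> 1"
    and convex: "\<forall>i\<in>{0..N}. convex_on UNIV (f i)"
    and Xprops: "X \<noteq> {}" "compact X" "convex X"
    and subgrad: "\<forall>i\<in>{0..N}. \<forall>y. is_subgrad (f i) y (g i y)"
    and subgrad_meas: "\<forall>i\<in>{0..N}. g i \<in> borel_measurable borel"
    and slater: "xbar \<in> X" "\<forall>i\<in>{1..N}. f i xbar < 0"
    and lamt: "\<forall>i\<in>{1..N}. lamt i \<ge> 0"
    and r: "r > 0"
    and saddle: "xs \<in> X" "lams \<in> Dset N B"
      "\<forall>x\<in>X. \<forall>l\<in>Dset N B. Lag N f xs l \<le> Lag N f xs lams \<and> Lag N f xs lams \<le> Lag N f x lams"
      "Lag N f xs lams = optval N f X"
    and prob: "prob_space M"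
    and h_meas: "\<forall>i j. h i j \<in> borel_measurable M"
    and n_meas: "\<forall>j. n j \<in> borel_measurable M"
    and n_int: "\<forall>j. integrable M (n j)"
    and n_mean: "\<forall>j. integral\<^sup>L M (n j) = 0"
    and n_sq_int: "\<forall>j. integrable M (\<lambda>\<omega>. (norm (n j \<omega>))\<^sup>2)"
    and n_var: "\<forall>j. integral\<^sup>L M (\<lambda>\<omega>. (norm (n j \<omega>))\<^sup>2) = \<sigma>\<^sup>2"
    and n_indep: "\<forall>j. indep_rv M (borel :: 'v measure) (n j)
        ((\<Pi>\<^sub>M t\<in>UNIV. \<Pi>\<^sub>M i\<in>UNIV. (borel :: complex measure)) \<Otimes>\<^sub>M (\<Pi>\<^sub>M t\<in>UNIV. (borel :: 'v measure)))
        (\<lambda>\<omega>. (\<lambda>t i. h i t \<omega>, \<lambda>t. if t = j then 0 else n t \<omega>))"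
    and init: "x0 \<in> X" "lam0 \<in> Dset N B" "\<forall>\<omega>. x 0 \<omega> = x0" "\<forall>\<omega>. lam 0 \<omega> = lam0"
    and steps: "\<forall>j. 0 < a j \<and> a j < 1"
    and beta: "\<beta> > 0" and Pmax: "Pmax > 0"
    and x_upd: "\<forall>j \<omega>. x (Suc j) \<omega> = closest_point X (x j \<omega> - a j *\<^sub>R
        (g 0 (x j \<omega>) + ((\<Sum>i\<in>A j \<omega>. s j \<omega> i) + sqrt \<beta> *\<^sub>R n j \<omega>)))"
    and lam_upd: "\<forall>j \<omega>. \<forall>i\<in>{1..N}. lam (Suc j) \<omega> i = closest_point {0..B} (lam j \<omega> i + a j * f i (x j \<omega>))"
    and constants: "G > 0" "L > 0" "R > 0" "L > G"
    and boundG: "\<forall>i\<in>{1..N}. \<forall>j \<omega>. norm (s j \<omega> i) \<le> G"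
    and boundLx: "\<forall>j \<omega>. norm (g 0 (x j \<omega>) + (\<Sum>i\<in>{1..N}. s j \<omega> i)) \<le> L"
    and boundLF: "\<forall>j \<omega>. sqrt (\<Sum>i\<in>{1..N}. (f i (x j \<omega>))\<^sup>2) \<le> L"
    and boundR: "\<forall>j \<omega>. norm (x j \<omega> - xs) \<le> R"
  shows "integral\<^sup>L M (\<lambda>\<omega>. (norm (x (Suc k) \<omega> - xs))\<^sup>2)
     \<le> integral\<^sup>L M (\<lambda>\<omega>. (norm (x k \<omega> - xs))\<^sup>2)
       - 2 * a k * integral\<^sup>L M (\<lambda>\<omega>. Lag N f (x k \<omega>) (lam k \<omega>) - Lag N f xs (lam k \<omega>))
       + (a k)\<^sup>2 * (2 * L * G * (real N - integral\<^sup>L M (\<lambda>\<omega>. real (card (A k \<omega>)))) + \<beta> * \<sigma>\<^sup>2 + L\<^sup>2)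
       + 2 * a k * (real N - integral\<^sup>L M (\<lambda>\<omega>. real (card (A k \<omega>)))) * R * G
       + (a k)\<^sup>2 * L\<^sup>2 * (real N - integral\<^sup>L M (\<lambda>\<omega>. real (card (A k \<omega>))))\<^sup>2"
proof -
  interpret P: prob_space M by (rule prob)
  have closedX: "closed X" using Xprops(2) compact_imp_closed by blast
  have N1: "1 \<in> {1..N}" using N by simp
  have lam0B: "\<forall>i\<in>{1..N}. 0 \<le> lam0 i \<and> lam0 i \<le> B"
  proof
    fix i assume i: "i \<in> {1..N}"
    have d: "(\<forall>i\<in>{1..N}. 0 \<le> lam0 i) \<and> (MAX i\<in>{1..N}. \<bar>lam0 i\<bar>) \<le> B"
      using init(2) unfolding Dset_def mem_Collect_eq by blast
    have "\<bar>lam0 i\<bar> \<le> (MAX i\<in>{1..N}. \<bar>lam0 i\<bar>)" using i by (intro Max_ge) auto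
    thus "0 \<le> lam0 i \<and> lam0 i \<le> B" using d i by auto
  qed
  hence B0: "B \<ge> 0" using N1 by force
  have lamB: "\<forall>\<omega> i. i\<in>{1..N} \<longrightarrow> 0 \<le> lam j \<omega> i \<and> lam j \<omega> i \<le> B" for j
  proof (cases j)
    case 0 thus ?thesis using lam0B init(4) by simp
  next
    case (Suc j')
    { fix \<omega> i assume i: "i \<in> {1..N}"
      have "closest_point {0..B} (lam j' \<omega> i + a j' * f i (x j' \<omega>)) \<in> {0..B}"
        by (rule closest_point_in_set) (use B0 in auto)
      hence "0 \<le> lam j \<omega> i \<and> lam j \<omega> i \<le> B" using lam_upd i Suc by simp }
    thus ?thesis by blast
  qed
  have xX: "x j \<omega> \<in> X" for j \<omega>
  proof (cases j)
    case 0 thus ?thesis using init by simp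
  next
    case (Suc j') thus ?thesis using x_upd closest_point_in_set[OF closedX Xprops(1)] by simp
  qed
  have fmeas: "f i \<in> borel_measurable borel" if "i \<in> {0..N}" for i
    using convex_on_continuous[OF open_UNIV] convex that borel_measurable_continuous_onI by blast
  have gmeas: "g i \<in> borel_measurable borel" if "i \<in> {0..N}" for i using subgrad_meas that by blast
  have cpX: "closest_point X \<in> borel_measurable borel"
    by (rule borel_measurable_continuous_onI, rule continuous_on_closest_point[OF Xprops(3) closedX Xprops(1)])
  have cpB: "closest_point {0..B} \<in> borel_measurable borel"
    by (rule borel_measurable_continuous_onI, rule continuous_on_closest_point) (use B0 in auto)
  have sumeq: "(\<Sum>i\<in>A j \<omega>. s j \<omega> i) = (\<Sum>i\<in>{1..N}. if (norm (s j \<omega> i))\<^sup>2 / (\<beta> * Pmax) \<le> (cmod (h i j \<omega>))\<^sup>2 then s j \<omega> i else 0)" for j \<omega>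
    unfolding A_def s_def by (simp only: sum.inter_filter[OF finite_atLeastAtMost])
  have meas_gen: "x j \<in> borel_measurable Nm \<and> (\<forall>i\<in>{1..N}. (\<lambda>\<omega>. lam j \<omega> i) \<in> borel_measurable Nm)"
    if hN: "\<And>i t. h i t \<in> borel_measurable Nm" and nN: "\<And>t. t < j \<Longrightarrow> n t \<in> borel_measurable Nm"
    for Nm :: "'w measure" and j
    using nN
  proof (induction j)
    case 0
    have "x 0 = (\<lambda>\<omega>. x0)" using init(3) by auto
    moreover have "(\<lambda>\<omega>. lam 0 \<omega> i) = (\<lambda>\<omega>. lam0 i)" for i using init(4) by auto
    ultimately show ?case by simp
  next
    case (Suc j)
    have IH: "x j \<in> borel_measurable Nm" "\<And>i. i\<in>{1..N} \<Longrightarrow> (\<lambda>\<omega>. lam j \<omega> i) \<in> borel_measurable Nm"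
      using Suc.IH Suc.prems by auto
    have nj: "n j \<in> borel_measurable Nm" using Suc.prems by auto
    have trm: "(\<lambda>\<omega>. if (norm (s j \<omega> i))\<^sup>2 / (\<beta> * Pmax) \<le> (cmod (h i j \<omega>))\<^sup>2 then s j \<omega> i else 0) \<in> borel_measurable Nm"
      if i: "i \<in> {1..N}" for i
    proof -
      have [measurable]: "(\<lambda>\<omega>. lam j \<omega> i) \<in> borel_measurable Nm" using IH(2) i .
      have [measurable]: "g i \<in> borel_measurable borel" using gmeas i by auto
      have [measurable]: "h i j \<in> borel_measurable Nm" by (rule hN)
      note [measurable] = IH(1)
      show ?thesis unfolding s_def by measurable
    qed
    define S0 where "S0 = (\<lambda>\<omega>. \<Sum>i\<in>{1..N}. if (norm (s j \<omega> i))\<^sup>2 / (\<beta> * Pmax) \<le> (cmod (h i j \<omega>))\<^sup>2 then s j \<omega> i else 0)"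
    have S0m[measurable]: "S0 \<in> borel_measurable Nm"
      unfolding S0_def by (rule borel_measurable_sum) (rule trm)
    have xe: "x (Suc j) = (\<lambda>\<omega>. closest_point X (x j \<omega> - a j *\<^sub>R (g 0 (x j \<omega>) + (S0 \<omega> + sqrt \<beta> *\<^sub>R n j \<omega>))))"
      using x_upd sumeq unfolding S0_def by auto
    have [measurable]: "g 0 \<in> borel_measurable borel" using gmeas by auto
    note [measurable] = IH(1) nj cpX cpB
    have xm: "x (Suc j) \<in> borel_measurable Nm" unfolding xe by measurable
    have lm: "(\<lambda>\<omega>. lam (Suc j) \<omega> i) \<in> borel_measurable Nm" if i: "i \<in> {1..N}" for i
    proof -
      have e: "(\<lambda>\<omega>. lam (Suc j) \<omega> i) = (\<lambda>\<omega>. closest_point {0..B} (lam j \<omega> i + a j * f i (x j \<omega>)))"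
        using lam_upd i by auto
      have [measurable]: "(\<lambda>\<omega>. lam j \<omega> i) \<in> borel_measurable Nm" using IH(2) i .
      have [measurable]: "f i \<in> borel_measurable borel" using fmeas i by auto
      show ?thesis unfolding e by measurable
    qed
    show ?case using xm lm by blast
  qed
  have xM: "x j \<in> borel_measurable M" and lamM: "\<And>i. i\<in>{1..N} \<Longrightarrow> (\<lambda>\<omega>. lam j \<omega> i) \<in> borel_measurable M" for j
    using meas_gen[of M j] h_meas n_meas by auto
  define MY where "MY = ((\<Pi>\<^sub>M t\<in>(UNIV::nat set). \<Pi>\<^sub>M i\<in>(UNIV::nat set). (borel :: complex measure)) \<Otimes>\<^sub>M (\<Pi>\<^sub>M t\<in>(UNIV::nat set). (borel :: 'v measure)))"
  define Y where "Y = (\<lambda>\<omega>. (\<lambda>t i. h i t \<omega>, \<lambda>t. if t = k then 0 else n t \<omega>))"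
  have indY: "indep_rv M (borel :: 'v measure) (n k) MY Y"
    using n_indep unfolding MY_def Y_def by blast
  define V where "V = vimage_algebra (space M) Y MY"
  have Ymeas: "Y \<in> measurable M MY" using indY unfolding indep_rv_def by blast
  have YV: "Y \<in> measurable V MY"
    unfolding V_def by (rule measurable_vimage_algebra1) (use Ymeas in \<open>auto simp: measurable_def\<close>)
  have sV: "space V = space M" unfolding V_def by simp
  have hV: "h i t \<in> borel_measurable V" for i t
  proof -
    have e: "h i t = (\<lambda>\<omega>. fst (Y \<omega>) t i)" unfolding Y_def by auto
    note f1 = measurable_compose[OF YV[unfolded MY_def] measurable_fst]
    note f2 = measurable_compose[OF f1 measurable_component_singleton[of t UNIV], simplified]
    note f3 = measurable_compose[OF f2 measurable_component_singleton[of i UNIV], simplified]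
    show ?thesis unfolding e using f3 by simp
  qed
  have nV: "n t \<in> borel_measurable V" if "t < k" for t
  proof -
    have e: "n t = (\<lambda>\<omega>. snd (Y \<omega>) t)" unfolding Y_def using that by auto
    note f1 = measurable_compose[OF YV[unfolded MY_def] measurable_snd]
    note f2 = measurable_compose[OF f1 measurable_component_singleton[of t UNIV], simplified]
    show ?thesis unfolding e using f2 by simp
  qed
  have xV: "x k \<in> borel_measurable V" and lamV: "\<And>i. i\<in>{1..N} \<Longrightarrow> (\<lambda>\<omega>. lam k \<omega> i) \<in> borel_measurable V"
    using meas_gen[of V k] hV nV by auto
  define Lx where "Lx = (\<lambda>\<omega>. g 0 (x k \<omega>) + (\<Sum>i\<in>{1..N}. s k \<omega> i))"
  define F1 where "F1 = (\<lambda>\<omega>. (norm (x k \<omega> - xs))\<^sup>2)"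
  define F2 where "F2 = (\<lambda>\<omega>. Lag N f (x k \<omega>) (lam k \<omega>) - Lag N f xs (lam k \<omega>))"
  define F3 where "F3 = (\<lambda>\<omega>. inner (x k \<omega> - xs - a k *\<^sub>R Lx \<omega>) (n k \<omega>))"
  define F4 where "F4 = (\<lambda>\<omega>. (norm (n k \<omega>))\<^sup>2)"
  define F5 where "F5 = (\<lambda>\<omega>. real (card (A k \<omega>)))"
  have ak: "0 < a k" "a k < 1" using steps by auto
  have Asub: "A j \<omega> \<subseteq> {1..N}" for j \<omega> unfolding A_def by auto
  have cardA: "card (A j \<omega>) \<le> N" for j \<omega> using card_mono[OF _ Asub[of j \<omega>]] by simp
  have LxL: "norm (Lx \<omega>) \<le> L" for \<omega> using boundLx unfolding Lx_def by blast
  have fL: "\<bar>f i (x j \<omega>)\<bar> \<le> L" if i: "i \<in> {1..N}" for i j \<omega>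
  proof -
    have "(f i (x j \<omega>))\<^sup>2 \<le> (\<Sum>i\<in>{1..N}. (f i (x j \<omega>))\<^sup>2)"
      using i by (intro member_le_sum) auto
    hence "sqrt ((f i (x j \<omega>))\<^sup>2) \<le> sqrt (\<Sum>i\<in>{1..N}. (f i (x j \<omega>))\<^sup>2)" by (rule real_sqrt_le_mono)
    moreover have "sqrt (\<Sum>i\<in>{1..N}. (f i (x j \<omega>))\<^sup>2) \<le> L" using boundLF by blast
    ultimately show ?thesis by (simp add: real_sqrt_abs)
  qed
  have subg: "f i y \<ge> f i z + inner (g i z) (y - z)" if "i \<in> {0..N}" for i y z
    using subgrad that unfolding is_subgrad_def by blast
  have gap_up: "F2 \<omega> \<le> inner (Lx \<omega>) (x k \<omega> - xs)" for \<omega>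
  proof -
    define xk where "xk = x k \<omega>"
    define l where "l = lam k \<omega>"
    have sg: "f i xk - f i xs \<le> inner (g i xk) (xk - xs)" if "i \<in> {0..N}" for i
    proof -
      have "f i xs \<ge> f i xk + inner (g i xk) (xs - xk)" using subgrad that unfolding is_subgrad_def by blast
      thus ?thesis by (simp add: inner_diff_right)
    qed
    have e: "F2 \<omega> = (f 0 xk - f 0 xs) + (\<Sum>i\<in>{1..N}. l i * (f i xk - f i xs))"
      unfolding F2_def Lag_def xk_def l_def by (simp add: sum_subtractf right_diff_distrib)
    have "(\<Sum>i\<in>{1..N}. l i * (f i xk - f i xs)) \<le> (\<Sum>i\<in>{1..N}. l i * inner (g i xk) (xk - xs))"
    proof (rule sum_mono)
      fix i assume i: "i \<in> {1..N}"
      have "0 \<le> l i" using lamB i unfolding l_def by blast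
      thus "l i * (f i xk - f i xs) \<le> l i * inner (g i xk) (xk - xs)"
        using sg[of i] i by (intro mult_left_mono) auto
    qed
    also have "\<dots> = inner (\<Sum>i\<in>{1..N}. s k \<omega> i) (xk - xs)"
      unfolding s_def xk_def l_def by (simp add: inner_sum_left)
    finally have "(\<Sum>i\<in>{1..N}. l i * (f i xk - f i xs)) \<le> inner (\<Sum>i\<in>{1..N}. s k \<omega> i) (xk - xs)" .
    moreover have "f 0 xk - f 0 xs \<le> inner (g 0 xk) (xk - xs)" using sg[of 0] by simp
    ultimately show ?thesis unfolding e Lx_def xk_def by (simp add: inner_add_left)
  qed
  define Cg where "Cg = norm (g 0 xs) * R + (\<Sum>i\<in>{1..N}. B * (L + \<bar>f i xs\<bar>)) + L * R"
  have gap_bd: "norm (F2 \<omega>) \<le> Cg" for \<omega>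
  proof -
    define xk where "xk = x k \<omega>"
    define l where "l = lam k \<omega>"
    have e: "F2 \<omega> = (f 0 xk - f 0 xs) + (\<Sum>i\<in>{1..N}. l i * (f i xk - f i xs))"
      unfolding F2_def Lag_def xk_def l_def by (simp add: sum_subtractf right_diff_distrib)
    have "inner (g 0 xs) (xk - xs) \<ge> - (norm (g 0 xs) * norm (xk - xs))"
      using Cauchy_Schwarz_ineq2[of "g 0 xs" "xk - xs"] by linarith
    moreover have "norm (g 0 xs) * norm (xk - xs) \<le> norm (g 0 xs) * R"
      using boundR unfolding xk_def by (intro mult_left_mono) auto
    moreover have "f 0 xk \<ge> f 0 xs + inner (g 0 xs) (xk - xs)" using subgrad unfolding is_subgrad_def by simp
    ultimately have l1: "f 0 xk - f 0 xs \<ge> - (norm (g 0 xs) * R)" by simp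
    have l2: "(\<Sum>i\<in>{1..N}. l i * (f i xk - f i xs)) \<ge> (\<Sum>i\<in>{1..N}. - (B * (L + \<bar>f i xs\<bar>)))"
    proof (rule sum_mono)
      fix i assume i: "i \<in> {1..N}"
      have li: "0 \<le> l i" "l i \<le> B" using lamB i unfolding l_def by blast+
      have "\<bar>f i xk - f i xs\<bar> \<le> L + \<bar>f i xs\<bar>" using fL[OF i, of k \<omega>] unfolding xk_def by linarith
      hence "\<bar>l i * (f i xk - f i xs)\<bar> \<le> B * (L + \<bar>f i xs\<bar>)" using li
        by (simp add: abs_mult) (rule mult_mono, auto)
      thus "- (B * (L + \<bar>f i xs\<bar>)) \<le> l i * (f i xk - f i xs)" by linarith
    qed
    have "inner (Lx \<omega>) (x k \<omega> - xs) \<le> norm (Lx \<omega>) * norm (x k \<omega> - xs)" by (rule norm_cauchy_schwarz)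
    also have "\<dots> \<le> L * R" using LxL boundR constants by (intro mult_mono) auto
    finally have up: "F2 \<omega> \<le> L * R" using gap_up[of \<omega>] by linarith
    have "F2 \<omega> \<ge> - (norm (g 0 xs) * R) - (\<Sum>i\<in>{1..N}. B * (L + \<bar>f i xs\<bar>))"
      using l1 l2 unfolding e by (simp add: sum_negf)
    moreover have "norm (g 0 xs) * R \<ge> 0" "(\<Sum>i\<in>{1..N}. B * (L + \<bar>f i xs\<bar>)) \<ge> 0" "L * R \<ge> 0"
      using constants B0 by (auto intro!: sum_nonneg)
    ultimately show ?thesis using up unfolding Cg_def by simp
  qed
  have sumsM: "(\<lambda>\<omega>. \<Sum>i\<in>{1..N}. s k \<omega> i) \<in> borel_measurable Nm"
    if "x k \<in> borel_measurable Nm" "\<And>i. i\<in>{1..N} \<Longrightarrow> (\<lambda>\<omega>. lam k \<omega> i) \<in> borel_measurable Nm" for Nm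
  proof (rule borel_measurable_sum)
    fix i assume i: "i \<in> {1..N}"
    have [measurable]: "(\<lambda>\<omega>. lam k \<omega> i) \<in> borel_measurable Nm" using that(2) i .
    have [measurable]: "g i \<in> borel_measurable borel" using gmeas i by auto
    note [measurable] = that(1)
    show "(\<lambda>\<omega>. s k \<omega> i) \<in> borel_measurable Nm" unfolding s_def by measurable
  qed
  have LxM: "Lx \<in> borel_measurable Nm"
    if "x k \<in> borel_measurable Nm" "\<And>i. i\<in>{1..N} \<Longrightarrow> (\<lambda>\<omega>. lam k \<omega> i) \<in> borel_measurable Nm" for Nm
  proof -
    have [measurable]: "g 0 \<in> borel_measurable borel" using gmeas by auto
    note [measurable] = that(1) sumsM[OF that]
    show ?thesis unfolding Lx_def by measurable
  qed
  have wV: "(\<lambda>\<omega>. x k \<omega> - xs - a k *\<^sub>R Lx \<omega>) \<in> borel_measurable V"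
  proof -
    note [measurable] = xV LxM[OF xV lamV]
    show ?thesis by measurable
  qed
  have wb: "\<forall>\<omega>. norm (x k \<omega> - xs - a k *\<^sub>R Lx \<omega>) \<le> R + a k * L"
  proof
    fix \<omega>
    have "norm (x k \<omega> - xs - a k *\<^sub>R Lx \<omega>) \<le> norm (x k \<omega> - xs) + norm (a k *\<^sub>R Lx \<omega>)"
      by (rule norm_triangle_ineq4)
    moreover have "norm (a k *\<^sub>R Lx \<omega>) \<le> a k * L" using ak LxL[of \<omega>] by (simp add: mult_left_mono)
    moreover have "norm (x k \<omega> - xs) \<le> R" using boundR by blast
    ultimately show "norm (x k \<omega> - xs - a k *\<^sub>R Lx \<omega>) \<le> R + a k * L" by linarith
  qed
  have I3: "integrable M F3" and E3: "integral\<^sup>L M F3 = 0"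
    unfolding F3_def using indep_inner_zero[OF prob indY n_int[rule_format] n_mean[rule_format] wV[unfolded V_def] wb]
    by auto
  have I4: "integrable M F4" and E4: "integral\<^sup>L M F4 = \<sigma>\<^sup>2" unfolding F4_def using n_sq_int n_var by auto
  have I1: "integrable M F1"
  proof (rule P.integrable_const_bound[where B="R\<^sup>2"])
    show "AE x in M. norm (F1 x) \<le> R\<^sup>2" unfolding F1_def using boundR
      by (auto intro!: AE_I2 power_mono)
    note [measurable] = xM
    show "F1 \<in> borel_measurable M" unfolding F1_def by measurable
  qed
  have I2: "integrable M F2"
  proof (rule P.integrable_const_bound[where B=Cg])
    show "AE x in M. norm (F2 x) \<le> Cg" using gap_bd by auto
    have L1: "(\<lambda>\<omega>. Lag N f (x k \<omega>) (lam k \<omega>)) \<in> borel_measurable M"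
      unfolding Lag_def
    proof (intro borel_measurable_add borel_measurable_sum)
      have [measurable]: "f 0 \<in> borel_measurable borel" using fmeas by auto
      note [measurable] = xM
      show "(\<lambda>\<omega>. f 0 (x k \<omega>)) \<in> borel_measurable M" by measurable
      fix i assume i: "i \<in> {1..N}"
      have [measurable]: "f i \<in> borel_measurable borel" using fmeas i by auto
      have [measurable]: "(\<lambda>\<omega>. lam k \<omega> i) \<in> borel_measurable M" using lamM i .
      show "(\<lambda>\<omega>. lam k \<omega> i * f i (x k \<omega>)) \<in> borel_measurable M" by measurable
    qed
    have L2: "(\<lambda>\<omega>. Lag N f xs (lam k \<omega>)) \<in> borel_measurable M"
      unfolding Lag_def
    proof (intro borel_measurable_add borel_measurable_sum)
      show "(\<lambda>\<omega>. f 0 xs) \<in> borel_measurable M" by simp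
      fix i assume i: "i \<in> {1..N}"
      have [measurable]: "(\<lambda>\<omega>. lam k \<omega> i) \<in> borel_measurable M" using lamM i .
      show "(\<lambda>\<omega>. lam k \<omega> i * f i xs) \<in> borel_measurable M" by measurable
    qed
    show "F2 \<in> borel_measurable M" unfolding F2_def using L1 L2 by measurable
  qed
  have F5eq: "F5 \<omega> = (\<Sum>i\<in>{1..N}. if (norm (lam k \<omega> i *\<^sub>R g i (x k \<omega>)))\<^sup>2 / (\<beta> * Pmax) \<le> (cmod (h i k \<omega>))\<^sup>2 then 1 else 0)" for \<omega>
  proof -
    have "F5 \<omega> = (\<Sum>i\<in>A k \<omega>. (1::real))" unfolding F5_def by simp
    also have "\<dots> = (\<Sum>i\<in>{1..N}. if (norm (lam k \<omega> i *\<^sub>R g i (x k \<omega>)))\<^sup>2 / (\<beta> * Pmax) \<le> (cmod (h i k \<omega>))\<^sup>2 then 1 else 0)"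
      unfolding A_def by (simp only: sum.inter_filter[OF finite_atLeastAtMost])
    finally show ?thesis .
  qed
  have I5: "integrable M F5"
  proof (rule P.integrable_const_bound[where B="real N"])
    show "AE x in M. norm (F5 x) \<le> real N" unfolding F5_def using cardA by auto
    have "(\<lambda>\<omega>. \<Sum>i\<in>{1..N}. if (norm (lam k \<omega> i *\<^sub>R g i (x k \<omega>)))\<^sup>2 / (\<beta> * Pmax) \<le> (cmod (h i k \<omega>))\<^sup>2 then 1 else (0::real)) \<in> borel_measurable M"
    proof (rule borel_measurable_sum)
      fix i assume i: "i \<in> {1..N}"
      have [measurable]: "(\<lambda>\<omega>. lam k \<omega> i) \<in> borel_measurable M" using lamM i .
      have [measurable]: "g i \<in> borel_measurable borel" using gmeas i by auto
      have [measurable]: "h i k \<in> borel_measurable M" using h_meas by auto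
      note [measurable] = xM
      show "(\<lambda>\<omega>. if (norm (lam k \<omega> i *\<^sub>R g i (x k \<omega>)))\<^sup>2 / (\<beta> * Pmax) \<le> (cmod (h i k \<omega>))\<^sup>2 then 1 else (0::real)) \<in> borel_measurable M"
        by measurable
    qed
    thus "F5 \<in> borel_measurable M" using F5eq by (metis (no_types, lifting) ext)
  qed
  have ILHS: "integrable M (\<lambda>\<omega>. (norm (x (Suc k) \<omega> - xs))\<^sup>2)"
  proof (rule P.integrable_const_bound[where B="R\<^sup>2"])
    show "AE \<omega> in M. norm ((norm (x (Suc k) \<omega> - xs))\<^sup>2) \<le> R\<^sup>2" using boundR
      by (auto intro!: AE_I2 power_mono)
    note [measurable] = xM
    show "(\<lambda>\<omega>. (norm (x (Suc k) \<omega> - xs))\<^sup>2) \<in> borel_measurable M" by measurable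
  qed
  define RH where "RH = (\<lambda>\<omega>. F1 \<omega> - 2 * a k * F2 \<omega> + (a k)\<^sup>2 * L\<^sup>2 - 2 * a k * sqrt \<beta> * F3 \<omega>
      + (a k)\<^sup>2 * \<beta> * F4 \<omega> + 2 * a k * R * (G * (real N - F5 \<omega>)))"
  have pw: "(norm (x (Suc k) \<omega> - xs))\<^sup>2 \<le> RH \<omega>" for \<omega>
  proof -
    define E where "E = (\<Sum>i\<in>{1..N} - A k \<omega>. s k \<omega> i)"
    have Lxe: "Lx \<omega> = g 0 (x k \<omega>) + (\<Sum>i\<in>A k \<omega>. s k \<omega> i) + E"
      unfolding Lx_def E_def using sum.subset_diff[OF Asub[of k \<omega>] finite_atLeastAtMost, of "s k \<omega>"]
      by (simp add: add_ac)
    have "norm E \<le> (\<Sum>i\<in>{1..N} - A k \<omega>. G)" unfolding E_def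
      by (rule sum_norm_le) (use boundG in auto)
    also have "\<dots> = G * (real N - F5 \<omega>)"
      using card_Diff_subset[OF finite_subset[OF Asub finite_atLeastAtMost] Asub[of k \<omega>]] cardA[of k \<omega>]
      unfolding F5_def by (simp add: of_nat_diff mult.commute)
    finally have Eb: "norm E \<le> G * (real N - F5 \<omega>)" .
    have "(norm (x (Suc k) \<omega> - xs))\<^sup>2 \<le> (norm (x k \<omega> - xs))\<^sup>2 - 2 * a k * F2 \<omega> + (a k)\<^sup>2 * L\<^sup>2
      - 2 * a k * sqrt \<beta> * inner (x k \<omega> - xs - a k *\<^sub>R Lx \<omega>) (n k \<omega>) + (a k)\<^sup>2 * \<beta> * (norm (n k \<omega>))\<^sup>2 + 2 * a k * R * (G * (real N - F5 \<omega>))"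
      by (rule pointwise_step[OF x_upd[rule_format] Xprops(3) closedX Xprops(1) saddle(1) boundR[rule_format] ak(1) beta Lxe Eb LxL gap_up])
    thus ?thesis unfolding RH_def F1_def F3_def F4_def .
  qed
  have IRH: "integrable M RH" unfolding RH_def using I1 I2 I3 I4 I5 by auto
  have ERH: "integral\<^sup>L M RH = integral\<^sup>L M F1 - 2 * a k * integral\<^sup>L M F2 + (a k)\<^sup>2 * L\<^sup>2
      - 2 * a k * sqrt \<beta> * integral\<^sup>L M F3 + (a k)\<^sup>2 * \<beta> * integral\<^sup>L M F4 + 2 * a k * R * (G * (real N - integral\<^sup>L M F5))"
    unfolding RH_def using I1 I2 I3 I4 I5 by (simp add: P.prob_space)
  have mono: "integral\<^sup>L M (\<lambda>\<omega>. (norm (x (Suc k) \<omega> - xs))\<^sup>2) \<le> integral\<^sup>L M RH"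
    by (rule integral_mono[OF ILHS IRH pw])
  have E5: "integral\<^sup>L M F5 \<le> real N"
  proof -
    have "integral\<^sup>L M F5 \<le> integral\<^sup>L M (\<lambda>\<omega>. real N)"
      by (rule integral_mono[OF I5]) (use cardA in \<open>auto simp: F5_def\<close>)
    thus ?thesis by (simp add: P.prob_space)
  qed
  define d where "d = real N - integral\<^sup>L M F5"
  have d0: "d \<ge> 0" using E5 unfolding d_def by simp
  have x1: "(a k)\<^sup>2 * (2 * L * G * d) \<ge> 0" using d0 constants by simp
  have x2: "(a k)\<^sup>2 * L\<^sup>2 * d\<^sup>2 \<ge> 0" by simp
  have x3: "2 * a k * R * (G * d) = 2 * a k * d * R * G" by (simp add: algebra_simps)
  have x4: "(a k)\<^sup>2 * (2 * L * G * d + \<beta> * \<sigma>\<^sup>2 + L\<^sup>2) = (a k)\<^sup>2 * (2 * L * G * d) + (a k)\<^sup>2 * \<beta> * \<sigma>\<^sup>2 + (a k)\<^sup>2 * L\<^sup>2"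
    by (simp add: algebra_simps)
  have "integral\<^sup>L M (\<lambda>\<omega>. (norm (x (Suc k) \<omega> - xs))\<^sup>2) \<le> integral\<^sup>L M F1 - 2 * a k * integral\<^sup>L M F2
     + (a k)\<^sup>2 * (2 * L * G * d + \<beta> * \<sigma>\<^sup>2 + L\<^sup>2) + 2 * a k * d * R * G + (a k)\<^sup>2 * L\<^sup>2 * d\<^sup>2"
  proof -
    have "integral\<^sup>L M RH = integral\<^sup>L M F1 - 2 * a k * integral\<^sup>L M F2 + (a k)\<^sup>2 * L\<^sup>2
      + (a k)\<^sup>2 * \<beta> * \<sigma>\<^sup>2 + 2 * a k * R * (G * d)"
      using ERH E3 E4 unfolding d_def by simp
    thus ?thesis using mono x1 x2 x3 x4 by linarith
  qed
  thus ?thesis unfolding d_def F1_def F2_def F5_def .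
qed

end
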